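(* Let $(T,D)$ be a predominated tree. Staller wins the MBD game on $(T,D)$ if and only if $T$ contains a substructure $F\in\mathcal S$ such that $X(F)\cap D=\emptyset$.
   Context: A predominated graph is a pair $(G,D)$ with $G$ a finite simple graph and $D\subseteq V(G)$. In the MBD game on $(G,D)$, Staller and Dominator alternately claim unclaimed vertices of $V(G)$ (including vertices of $D$), Staller first, until all vertices are claimed; Staller wins if she claims all of $N_G[v]$ for some $v\in V(G)\setminus D$, and Dominator wins otherwise. For a tree $T$, $S(T)$ is obtained by subdividing each edge of $T$ exactly once; $\mathcal S=\{S(T):T\text{ a tree}\}$ and $X(S(T))=V(T)$ (with $S(P_1)=P_1$, $X(P_1)=V(P_1)$). $F\in\mathcal S$ is a substructure in $G$ if $F$ is a subgraph of $G$ and $\deg_G(v)=\deg_F(v)$ for every $v\in X(F)$. *)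

theory Defs
  imports Main
begin

definition graph :: "'a set \<Rightarrow> ('a \<Rightarrow> 'a \<Rightarrow> bool) \<Rightarrow> bool" where
  "graph V E \<longleftrightarrow> finite V \<and> (\<forall>u v. E u v \<longrightarrow> u \<in> V \<and> v \<in> V)
     \<and> (\<forall>u v. E u v \<longrightarrow> E v u) \<and> (\<forall>u. \<not> E u u)"

definition connected :: "'a set \<Rightarrow> ('a \<Rightarrow> 'a \<Rightarrow> bool) \<Rightarrow> bool" where
  "connected V E \<longleftrightarrow> (\<forall>u\<in>V. \<forall>v\<in>V. E\<^sup>*\<^sup>* u v)"

definition is_cycle :: "('a \<Rightarrow> 'a \<Rightarrow> bool) \<Rightarrow> 'a list \<Rightarrow> bool" where
  "is_cycle E cs \<longleftrightarrow> length cs \<ge> 3 \<and> distinct cs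
     \<and> (\<forall>i. Suc i < length cs \<longrightarrow> E (cs ! i) (cs ! Suc i)) \<and> E (last cs) (hd cs)"

definition tree :: "'a set \<Rightarrow> ('a \<Rightarrow> 'a \<Rightarrow> bool) \<Rightarrow> bool" where
  "tree V E \<longleftrightarrow> graph V E \<and> V \<noteq> {} \<and> connected V E \<and> (\<nexists>cs. is_cycle E cs)"

definition nbhd :: "'a set \<Rightarrow> ('a \<Rightarrow> 'a \<Rightarrow> bool) \<Rightarrow> 'a \<Rightarrow> 'a set" where
  "nbhd V E v = {u \<in> V. E v u}"

definition closed_nbhd :: "'a set \<Rightarrow> ('a \<Rightarrow> 'a \<Rightarrow> bool) \<Rightarrow> 'a \<Rightarrow> 'a set" where
  "closed_nbhd V E v = insert v (nbhd V E v)"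

definition degree :: "'a set \<Rightarrow> ('a \<Rightarrow> 'a \<Rightarrow> bool) \<Rightarrow> 'a \<Rightarrow> nat" where
  "degree V E v = card (nbhd V E v)"

definition staller_final :: "'a set \<Rightarrow> ('a \<Rightarrow> 'a \<Rightarrow> bool) \<Rightarrow> 'a set \<Rightarrow> 'a set \<Rightarrow> bool" where
  "staller_final V E D S \<longleftrightarrow> (\<exists>v \<in> V - D. closed_nbhd V E v \<subseteq> S)"

text \<open>mbd_win V E D n S U t: with n moves remaining, Staller owning S,
unclaimed vertices U, and t = True iff Staller is to move, Staller can force
a win (perfect-information finite game, backward induction).\<close>
primrec mbd_win :: "'a set \<Rightarrow> ('a \<Rightarrow> 'a \<Rightarrow> bool) \<Rightarrow> 'a set \<Rightarrow> nat \<Rightarrow> 'a set \<Rightarrow> 'a set \<Rightarrow> bool \<Rightarrow> bool" where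
  "mbd_win V E D 0 S U t = staller_final V E D S"
| "mbd_win V E D (Suc n) S U t =
     (if t then (\<exists>u\<in>U. mbd_win V E D n (insert u S) (U - {u}) False)
      else (\<forall>u\<in>U. mbd_win V E D n S (U - {u}) True))"

definition staller_wins_MBD :: "'a set \<Rightarrow> ('a \<Rightarrow> 'a \<Rightarrow> bool) \<Rightarrow> 'a set \<Rightarrow> bool" where
  "staller_wins_MBD V E D \<longleftrightarrow> mbd_win V E D (card V) {} V True"

text \<open>(VF, EF) is (isomorphic to) S(T) for a tree T with vertex set X = X(F):
the vertices outside X are in bijection m with the edges of T, and the edges
of F are exactly x -- m{x,y} for tree edges xy.\<close>
definition is_S_graph :: "'a set \<Rightarrow> ('a \<Rightarrow> 'a \<Rightarrow> bool) \<Rightarrow> 'a set \<Rightarrow> bool" where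
  "is_S_graph VF EF X \<longleftrightarrow> X \<subseteq> VF \<and>
     (\<exists>ET m. tree X ET \<and> bij_betw m {{x, y} | x y. ET x y} (VF - X)
        \<and> (\<forall>u w. EF u w \<longleftrightarrow> (\<exists>x y. ET x y \<and>
               ((u = x \<and> w = m {x, y}) \<or> (u = m {x, y} \<and> w = x)))))"

definition subgraph :: "'a set \<Rightarrow> ('a \<Rightarrow> 'a \<Rightarrow> bool) \<Rightarrow> 'a set \<Rightarrow> ('a \<Rightarrow> 'a \<Rightarrow> bool) \<Rightarrow> bool" where
  "subgraph VF EF V E \<longleftrightarrow> graph VF EF \<and> VF \<subseteq> V \<and> (\<forall>u w. EF u w \<longrightarrow> E u w)"

definition substructure :: "'a set \<Rightarrow> ('a \<Rightarrow> 'a \<Rightarrow> bool) \<Rightarrow> 'a set \<Rightarrow> ('a \<Rightarrow> 'a \<Rightarrow> bool) \<Rightarrow> 'a set \<Rightarrow> bool" where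
  "substructure V E VF EF X \<longleftrightarrow> is_S_graph VF EF X \<and> subgraph VF EF V E
     \<and> (\<forall>v\<in>X. degree V E v = degree VF EF v)"

end

theory Submission
  imports Defs
begin


definition acyc :: "('a \<Rightarrow> 'a \<Rightarrow> bool) \<Rightarrow> bool" where
  "acyc E \<longleftrightarrow> (\<nexists>cs. is_cycle E cs)"

lemma is_cycle_mono: "is_cycle F cs \<Longrightarrow> (\<And>a b. F a b \<Longrightarrow> E a b) \<Longrightarrow> is_cycle E cs"
  unfolding is_cycle_def by auto

lemma acyc_mono: "acyc E \<Longrightarrow> (\<And>a b. F a b \<Longrightarrow> E a b) \<Longrightarrow> acyc F"
  unfolding acyc_def using is_cycle_mono by metis

lemma nbhd_graph: "graph V E \<Longrightarrow> nbhd V E x = {u. E x u}"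
  unfolding nbhd_def graph_def by auto

lemma finite_nbhd: "graph V E \<Longrightarrow> finite (nbhd V E x)"
  unfolding nbhd_def graph_def by auto

definition is_path :: "('a \<Rightarrow> 'a \<Rightarrow> bool) \<Rightarrow> 'a list \<Rightarrow> bool" where
  "is_path F ps \<longleftrightarrow> ps \<noteq> [] \<and> distinct ps \<and> (\<forall>i. Suc i < length ps \<longrightarrow> F (ps!i) (ps!Suc i))"

lemma leaf_exists:
  assumes g: "graph W F" and a: "acyc F" and ne: "W \<noteq> {}"
  shows "\<exists>w\<in>W. card (nbhd W F w) \<le> 1"
proof -
  let ?P = "\<lambda>k. \<exists>ps. is_path F ps \<and> set ps \<subseteq> W \<and> length ps = k"
  from ne obtain w0 where "w0 \<in> W" by auto
  hence p1: "?P 1" by (intro exI[of _ "[w0]"]) (auto simp: is_path_def)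
  have bnd: "\<forall>y. ?P y \<longrightarrow> y \<le> card W"
    using g unfolding graph_def is_path_def
    by (metis card_mono distinct_card)
  obtain k where "?P k" and kmax: "\<forall>y. ?P y \<longrightarrow> y \<le> k"
    using Nat.ex_has_greatest_nat[OF p1 bnd] by blast
  then obtain ps where ps: "is_path F ps" "set ps \<subseteq> W" "length ps = k" by blast
  have sym: "\<And>a b. F a b \<Longrightarrow> F b a" and irr: "\<And>a. \<not> F a a"
    and inW: "\<And>a b. F a b \<Longrightarrow> a \<in> W \<and> b \<in> W" using g unfolding graph_def by auto
  define v where "v = hd ps"
  have ne2: "ps \<noteq> []" using ps unfolding is_path_def by auto
  have v0: "ps ! 0 = v" using ne2 unfolding v_def by (simp add: hd_conv_nth)
  have vW: "v \<in> W" using ps ne2 v_def by auto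
  have sub: "nbhd W F v \<subseteq> {ps ! 1}"
  proof
    fix u assume "u \<in> nbhd W F v"
    hence Fu: "F v u" and uW: "u \<in> W" unfolding nbhd_def by auto
    show "u \<in> {ps ! 1}"
    proof (cases "u \<in> set ps")
      case False
      have "is_path F (u # ps)" using ps False Fu sym v0 unfolding is_path_def
        by (auto simp: nth_Cons split: nat.splits)
      moreover have "set (u # ps) \<subseteq> W" using ps uW by auto
      ultimately have "?P (Suc k)" using ps by (intro exI[of _ "u # ps"]) auto
      with kmax show ?thesis by auto
    next
      case True
      then obtain j where j: "j < length ps" "ps ! j = u" by (auto simp: in_set_conv_nth)
      have "j \<noteq> 0" using j v0 irr Fu by (metis)
      moreover have "\<not> j \<ge> 2"
      proof
        assume j2: "j \<ge> 2"
        let ?cs = "take (Suc j) ps"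
        have "is_cycle F ?cs"
          unfolding is_cycle_def
        proof (intro conjI allI impI)
          show "3 \<le> length ?cs" using j j2 by auto
          show "distinct ?cs" using ps unfolding is_path_def by auto
          fix i assume "Suc i < length ?cs"
          thus "F (?cs ! i) (?cs ! Suc i)" using ps unfolding is_path_def by auto
        next
          have "last ?cs = u" using j by (subst last_conv_nth) (auto simp: min_def intro: arg_cong[where f="(!) ps"])
          moreover have "hd ?cs = v" using ne2 v_def by simp
          ultimately show "F (last ?cs) (hd ?cs)" using sym Fu by simp
        qed
        thus False using a unfolding acyc_def by blast
      qed
      ultimately have "j = 1" by auto
      thus ?thesis using j by auto
    qed
  qed
  have "card (nbhd W F v) \<le> 1" using card_mono[OF _ sub] by auto
  thus ?thesis using vW by blast
qed



lemma final_mono: "staller_final V E D S \<Longrightarrow> S \<subseteq> S' \<Longrightarrow> staller_final V E D S'"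
  unfolding staller_final_def by blast

lemma win_final: "staller_final V E D S \<Longrightarrow> finite U \<Longrightarrow> card U = n \<Longrightarrow> mbd_win V E D n S U t"
proof (induction n arbitrary: S U t)
  case 0
  then show ?case by simp
next
  case (Suc n)
  from Suc.prems have "U \<noteq> {}" by auto
  then obtain u where u: "u \<in> U" by auto
  have "mbd_win V E D n (insert u S) (U - {u}) False"
    using Suc.IH[of "insert u S" "U - {u}" False] Suc.prems u final_mono[of V E D S "insert u S"]
    by auto
  hence 1: "mbd_win V E D (Suc n) S U True" using u by auto
  have "\<forall>u\<in>U. mbd_win V E D n S (U - {u}) True"
    using Suc.IH Suc.prems by auto
  hence 2: "mbd_win V E D (Suc n) S U False" by auto
  show ?case using 1 2 by (cases t) auto
qed

definition matching :: "'a set \<Rightarrow> ('a \<Rightarrow> 'a \<Rightarrow> bool) \<Rightarrow> 'a set \<Rightarrow> ('a \<Rightarrow> 'a \<Rightarrow> bool) \<Rightarrow> bool" where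
  "matching V E D P \<longleftrightarrow> (\<forall>u v. P u v \<longrightarrow> E u v) \<and> (\<forall>u v. P u v \<longrightarrow> P v u)
     \<and> (\<forall>u v w. P u v \<longrightarrow> P u w \<longrightarrow> v = w) \<and> (\<forall>v\<in>V - D. \<exists>w. P v w)"

definition dinv :: "('a \<Rightarrow> 'a \<Rightarrow> bool) \<Rightarrow> 'a set \<Rightarrow> 'a set \<Rightarrow> bool" where
  "dinv P S U \<longleftrightarrow> (\<forall>u v. P u v \<longrightarrow> (u\<in>U \<and> v\<in>U) \<or> (u\<notin>S \<and> u\<notin>U) \<or> (v\<notin>S \<and> v\<notin>U))"

lemma nofinal:
  assumes g: "graph V E" and m: "matching V E D P" and d: "dinv P S U" and disj: "S \<inter> U = {}"
    and A: "A \<subseteq> U" "\<forall>a\<in>A. \<forall>b\<in>A. a = b"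
  shows "\<not> staller_final V E D (S \<union> A)"
proof
  assume "staller_final V E D (S \<union> A)"
  then obtain v where v: "v \<in> V - D" "closed_nbhd V E v \<subseteq> S \<union> A"
    unfolding staller_final_def by blast
  then obtain w where P: "P v w" using m unfolding matching_def by blast
  hence Evw: "E v w" using m unfolding matching_def by auto
  hence "w \<in> nbhd V E v" using g nbhd_graph by fastforce
  hence in1: "v \<in> S \<union> A" "w \<in> S \<union> A" using v unfolding closed_nbhd_def by auto
  have irr: "\<not> E v v" using g unfolding graph_def by auto
  from d P have "(v\<in>U \<and> w\<in>U) \<or> (v\<notin>S \<and> v\<notin>U) \<or> (w\<notin>S \<and> w\<notin>U)" unfolding dinv_def by auto
  then show False
  proof (elim disjE conjE)
    assume "v \<in> U" "w \<in> U"
    hence "v \<in> A" "w \<in> A" using in1 disj by auto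
    thus False using A Evw irr by auto
  qed (use in1 A in auto)
qed

lemma dom_wins:
  assumes g: "graph V E" and m: "matching V E D P"
  shows "finite U \<Longrightarrow> card U = n \<Longrightarrow> S \<inter> U = {} \<Longrightarrow> dinv P S U \<Longrightarrow> \<not> mbd_win V E D n S U True"
proof (induction n arbitrary: S U rule: less_induct)
  case (less N)
  note Suc_prems = less.prems
  show ?case
  proof (cases N)
  case 0
  then show ?thesis using nofinal[OF g m less.prems(4) less.prems(3), of "{}"] by simp
next
  case (Suc n)
  have irr: "\<And>a. \<not> E a a" using g unfolding graph_def by auto
  have PE: "\<And>a b. P a b \<Longrightarrow> E a b" and Psym: "\<And>a b. P a b \<Longrightarrow> P b a"
    and Pfun: "\<And>a b c. P a b \<Longrightarrow> P a c \<Longrightarrow> b = c" using m unfolding matching_def by blast+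
  show ?thesis
  proof
    assume "mbd_win V E D N S U True"
    hence "mbd_win V E D (Suc n) S U True" using Suc by simp
    then obtain u where u: "u \<in> U" and w: "mbd_win V E D n (insert u S) (U - {u}) False" by auto
    show False
    proof (cases n)
      case 0
      then show False using w nofinal[OF g m Suc_prems(4) Suc_prems(3), of "{u}"] u by simp
    next
      case Suck: (Suc k)
      have cU: "card (U - {u}) = Suc k" using Suc_prems u Suc Suck by auto
      hence neU: "U - {u} \<noteq> {}" by (metis Zero_not_Suc card.empty)
      define y where "y = (if \<exists>p. P u p \<and> p \<in> U then (SOME p. P u p \<and> p \<in> U) else (SOME y. y \<in> U - {u}))"
      have yU: "y \<in> U - {u}"
      proof (cases "\<exists>p. P u p \<and> p \<in> U")
        case True
        hence "P u y \<and> y \<in> U" unfolding y_def using someI_ex[OF True] by simp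
        thus ?thesis using PE irr by auto
      next
        case False
        have "y = (SOME y. y \<in> U - {u})" unfolding y_def using False by (simp only: if_False)
        thus ?thesis using neU someI_ex[of "\<lambda>y. y \<in> U - {u}"] by (metis ex_in_conv)
      qed
      have ypart: "\<And>p. P u p \<Longrightarrow> p \<in> U \<Longrightarrow> y = p"
      proof -
        fix p assume "P u p" "p \<in> U"
        hence ex: "\<exists>p. P u p \<and> p \<in> U" by blast
        hence "P u y \<and> y \<in> U" unfolding y_def using someI_ex[OF ex] by simp
        thus "y = p" using Pfun \<open>P u p\<close> by blast
      qed
      have w2: "mbd_win V E D k (insert u S) (U - {u} - {y}) True"
        using w Suck yU by auto
      have fin: "finite (U - {u} - {y})" using Suc_prems by auto
      have card: "card (U - {u} - {y}) = k" using cU yU by auto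
      have disj: "insert u S \<inter> (U - {u} - {y}) = {}" using Suc_prems by auto
      have dv: "dinv P (insert u S) (U - {u} - {y})"
        unfolding dinv_def
      proof (intro allI impI)
        fix a b assume Pab: "P a b"
        have old: "(a\<in>U \<and> b\<in>U) \<or> (a\<notin>S \<and> a\<notin>U) \<or> (b\<notin>S \<and> b\<notin>U)"
          using Suc_prems(4) Pab unfolding dinv_def by auto
        have ab: "a \<noteq> b" using PE Pab irr by blast
        show "(a \<in> U - {u} - {y} \<and> b \<in> U - {u} - {y}) \<or> (a \<notin> insert u S \<and> a \<notin> U - {u} - {y}) \<or>
              (b \<notin> insert u S \<and> b \<notin> U - {u} - {y})"
        proof -
          { assume "a \<in> U" "b \<in> U"
            hence aS: "a \<notin> S" "b \<notin> S" using Suc_prems(3) by auto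
            have ?thesis
            proof (cases "a = u")
              case True
              hence "y = b" using ypart Pab \<open>b \<in> U\<close> by blast
              thus ?thesis using aS ab True by auto
            next
              case False
              note au = False
              show ?thesis
              proof (cases "b = u")
                case True
                hence "y = a" using ypart Psym[OF Pab] \<open>a \<in> U\<close> by blast
                thus ?thesis using aS ab True by auto
              next
                case False
                thus ?thesis using au aS \<open>a \<in> U\<close> \<open>b \<in> U\<close> by auto
              qed
            qed }
          thus ?thesis using old u by auto
        qed
      qed
      have kN: "k < N" using Suc Suck by simp
      show False using less.IH[OF kN fin card disj dv] w2 by simp
    qed
  qed
  qed
qed

definition sinv :: "'a set \<Rightarrow> ('a \<Rightarrow> 'a \<Rightarrow> bool) \<Rightarrow> 'a set \<Rightarrow> 'a set \<Rightarrow> 'a set \<Rightarrow> 'a set \<Rightarrow> bool" where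
  "sinv V E D S U X \<longleftrightarrow> X \<noteq> {} \<and> X \<subseteq> U \<and> X \<subseteq> V \<and> X \<inter> D = {} \<and> (\<forall>x\<in>X. \<forall>y\<in>X. \<not> E x y)
     \<and> (\<forall>x\<in>X. \<forall>z. E x z \<longrightarrow> z \<in> S \<union> U)
     \<and> (\<forall>x\<in>X. \<forall>z. E x z \<longrightarrow> z \<notin> S \<longrightarrow> card {y\<in>X. E y z} = 2)"

lemma find_x:
  assumes g: "graph V E" and a: "acyc E" and s: "sinv V E D S U X"
  shows "\<exists>x\<in>X. card {z. E x z \<and> z \<notin> S} \<le> 1"
proof -
  define M where "M = {z. z \<notin> S \<and> (\<exists>x\<in>X. E x z)}"
  define W where "W = X \<union> M"
  define F where "F = (\<lambda>a b. E a b \<and> (a \<in> X \<and> b \<in> M \<or> a \<in> M \<and> b \<in> X))"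
  have sym: "\<And>a b. E a b \<Longrightarrow> E b a" and irr: "\<And>a. \<not> E a a"
    and inV: "\<And>a b. E a b \<Longrightarrow> a \<in> V \<and> b \<in> V" and finV: "finite V" using g unfolding graph_def by auto
  have XV: "X \<subseteq> V" using s unfolding sinv_def by auto
  have "M \<subseteq> V" unfolding M_def using inV by auto
  hence "W \<subseteq> V" using XV W_def by auto
  hence gW: "graph W F" unfolding graph_def F_def W_def using finV finite_subset sym irr
    by (auto intro: finite_subset)
  have aF: "acyc F" by (rule acyc_mono[OF a]) (auto simp: F_def)
  have "W \<noteq> {}" using s unfolding sinv_def W_def by auto
  then obtain w where w: "w \<in> W" "card (nbhd W F w) \<le> 1" using leaf_exists[OF gW aF] by blast
  have fn: "finite (nbhd W F w)" using finite_nbhd[OF gW] .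
  have "w \<notin> M"
  proof
    assume wM: "w \<in> M"
    then obtain x where x: "x \<in> X" "E x w" "w \<notin> S" unfolding M_def by auto
    hence c2: "card {y\<in>X. E y w} = 2" using s unfolding sinv_def by auto
    have "{y\<in>X. E y w} \<subseteq> nbhd W F w" unfolding nbhd_def W_def F_def using wM sym by auto
    hence "2 \<le> card (nbhd W F w)" using card_mono[OF fn] c2 by metis
    thus False using w by auto
  qed
  hence wX: "w \<in> X" using w W_def by auto
  have "{z. E w z \<and> z \<notin> S} \<subseteq> nbhd W F w" unfolding nbhd_def W_def F_def M_def using wX by auto
  hence "card {z. E w z \<and> z \<notin> S} \<le> 1" using card_mono[OF fn] w by (meson le_trans)
  thus ?thesis using wX by blast
qed

lemma staller_strat:
  assumes g: "graph V E" and a: "acyc E"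
  shows "finite U \<Longrightarrow> card U = n \<Longrightarrow> sinv V E D S U X \<Longrightarrow> mbd_win V E D n S U True"
proof (induction n arbitrary: S U X rule: less_induct)
  case (less n)
  have sym: "\<And>a b. E a b \<Longrightarrow> E b a" and irr: "\<And>a. \<not> E a a"
    using g unfolding graph_def by auto
  have s: "sinv V E D S U X" by fact
  obtain x where xX: "x \<in> X" and cx: "card {z. E x z \<and> z \<notin> S} \<le> 1"
    using find_x[OF g a s] by blast
  have xU: "x \<in> U" and xV: "x \<in> V" and xD: "x \<notin> D" using s xX unfolding sinv_def by auto
  have fz: "finite {z. E x z \<and> z \<notin> S}" using g unfolding graph_def
    by (auto intro: finite_subset[of _ V])
  obtain n' where n': "n = Suc n'" using less.prems xU by (cases n) auto
  have fin_x: "staller_final V E D (insert x T)" if "{z. E x z \<and> z \<notin> S} \<subseteq> T" "S \<subseteq> T" for T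
  proof -
    have "closed_nbhd V E x \<subseteq> insert x T"
      unfolding closed_nbhd_def nbhd_graph[OF g] using that by auto
    thus ?thesis unfolding staller_final_def using xV xD by auto
  qed
  show ?case
  proof (cases "{z. E x z \<and> z \<notin> S} = {}")
    case True
    have "mbd_win V E D n' (insert x S) (U - {x}) False"
      using win_final[OF fin_x[of S]] True less.prems n' xU by auto
    then show ?thesis using n' xU by auto
  next
    case False
    then obtain m where mset: "{z. E x z \<and> z \<notin> S} = {m}"
      using cx fz by (metis card_1_singletonE card_0_eq le_Suc_eq le_zero_eq One_nat_def)
    hence Exm: "E x m" and mS: "m \<notin> S" by auto
    have mU: "m \<in> U" using s xX Exm mS unfolding sinv_def by auto
    have mx: "m \<noteq> x" using Exm irr by auto
    have c2m: "card {y\<in>X. E y m} = 2" using s xX Exm mS unfolding sinv_def by auto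
    have mX: "m \<notin> X" using s xX Exm unfolding sinv_def by auto
    have cU1: "card (U - {m}) = n'" using less.prems n' mU by auto
    have "x \<in> U - {m}" using xU mx by auto
    then obtain k where k: "n' = Suc k" using cU1 less.prems(1) by (cases n') auto
    have "\<forall>y\<in>U - {m}. mbd_win V E D k (insert m S) (U - {m} - {y}) True"
    proof
      fix y assume yU: "y \<in> U - {m}"
      have cU2: "card (U - {m} - {y}) = k" using cU1 k yU by auto
      have finU2: "finite (U - {m} - {y})" using less.prems by auto
      show "mbd_win V E D k (insert m S) (U - {m} - {y}) True"
      proof (cases "y = x")
        case False
        have xU2: "x \<in> U - {m} - {y}" using xU mx False by auto
        then obtain k' where k': "k = Suc k'" using cU2 finU2 by (cases k) auto
        have "staller_final V E D (insert x (insert m S))"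
          using fin_x[of "insert m S"] mset by auto
        moreover have "card (U - {m} - {y} - {x}) = k'" using cU2 k' xU2 finU2 by auto
        ultimately have "mbd_win V E D k' (insert x (insert m S)) (U - {m} - {y} - {x}) False"
          using win_final finU2 by blast
        then show ?thesis using k' xU2 by auto
      next
        case True
        have sv: "sinv V E D (insert m S) (U - {m} - {y}) (X - {x})"
          unfolding sinv_def
        proof (intro conjI ballI allI impI)
          obtain x2 where "x2 \<in> X" "E x2 m" "x2 \<noteq> x"
          proof -
            have "{y\<in>X. E y m} \<noteq> {x}" using c2m by auto
            moreover have "x \<in> {y\<in>X. E y m}" using xX Exm sym by auto
            ultimately obtain x2 where "x2 \<in> {y\<in>X. E y m}" "x2 \<noteq> x" by blast
            thus ?thesis using that by auto
          qed
          thus "X - {x} \<noteq> {}" by auto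
          show "X - {x} \<subseteq> U - {m} - {y}" using s mX True unfolding sinv_def by auto
          show "X - {x} \<subseteq> V" "(X - {x}) \<inter> D = {}" using s unfolding sinv_def by auto
          show "\<And>a b. a \<in> X - {x} \<Longrightarrow> b \<in> X - {x} \<Longrightarrow> \<not> E a b" using s unfolding sinv_def by auto
          fix x' z assume x': "x' \<in> X - {x}" and Ez: "E x' z"
          have zx: "z \<noteq> x" using s x' Ez xX unfolding sinv_def by auto
          have "z \<in> S \<union> U" using s x' Ez unfolding sinv_def by auto
          thus "z \<in> insert m S \<union> (U - {m} - {y})" using zx True by auto
          assume zS: "z \<notin> insert m S"
          have "card {y\<in>X. E y z} = 2" using s x' Ez zS unfolding sinv_def by auto
          moreover have "\<not> E x z" using zS mset by auto
          hence "{y\<in>X - {x}. E y z} = {y\<in>X. E y z}" by auto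
          ultimately show "card {y\<in>X - {x}. E y z} = 2" by simp
        qed
        have "k < n" using n' k by auto
        from less.IH[OF this finU2 cU2 sv] show ?thesis .
      qed
    qed
    hence "mbd_win V E D n' (insert m S) (U - {m}) False" using k by simp
    then show ?thesis using n' mU by auto
  qed
qed



definition bad :: "'a set \<Rightarrow> ('a \<Rightarrow> 'a \<Rightarrow> bool) \<Rightarrow> 'a set \<Rightarrow> 'a set \<Rightarrow> bool" where
  "bad V E D X \<longleftrightarrow> X \<noteq> {} \<and> X \<subseteq> V \<and> X \<inter> D = {} \<and> (\<forall>x\<in>X. \<forall>y\<in>X. \<not> E x y)
     \<and> (\<forall>x\<in>X. \<forall>z. E x z \<longrightarrow> card {y\<in>X. E y z} = 2)"

definition restr :: "'a set \<Rightarrow> ('a \<Rightarrow> 'a \<Rightarrow> bool) \<Rightarrow> 'a \<Rightarrow> 'a \<Rightarrow> bool" where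
  "restr W E a b \<longleftrightarrow> E a b \<and> a \<in> W \<and> b \<in> W"

lemma graph_restr: "graph V E \<Longrightarrow> W \<subseteq> V \<Longrightarrow> graph W (restr W E)"
  unfolding graph_def restr_def by (auto intro: finite_subset)

lemma acyc_restr: "acyc E \<Longrightarrow> acyc (restr W E)"
  using acyc_mono[of E "restr W E"] by (auto simp: restr_def)

lemma bad_lift:
  assumes b: "bad V' (restr V' E) D' X" and VV: "V' \<subseteq> V" and XD: "X \<inter> D = {}"
    and cl: "\<forall>x\<in>X. \<forall>z. E x z \<longrightarrow> z \<in> V'"
  shows "bad V E D X"
proof -
  have XV: "X \<subseteq> V'" and ne: "X \<noteq> {}" using b unfolding bad_def by auto
  have ind: "\<forall>x\<in>X. \<forall>y\<in>X. \<not> restr V' E x y" using b unfolding bad_def by blast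
  have cd: "\<forall>x\<in>X. \<forall>z. restr V' E x z \<longrightarrow> card {y\<in>X. restr V' E y z} = 2"
    using b unfolding bad_def by blast
  have i2: "\<forall>x\<in>X. \<forall>y\<in>X. \<not> E x y"
  proof (intro ballI)
    fix x y assume "x \<in> X" "y \<in> X"
    thus "\<not> E x y" using ind XV unfolding restr_def by blast
  qed
  have c2: "\<forall>x\<in>X. \<forall>z. E x z \<longrightarrow> card {y\<in>X. E y z} = 2"
  proof (intro ballI allI impI)
    fix x z assume x: "x \<in> X" and "E x z"
    hence z: "z \<in> V'" using cl by blast
    have "{y\<in>X. E y z} = {y\<in>X. restr V' E y z}" using XV z unfolding restr_def by blast
    moreover have "restr V' E x z" using \<open>E x z\<close> z x XV unfolding restr_def by blast
    ultimately show "card {y\<in>X. E y z} = 2" using cd x by simp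
  qed
  show ?thesis unfolding bad_def using ne XV VV XD i2 c2 by blast
qed

lemma L2:
  assumes g: "graph V E" and a: "acyc E" and e: "E a b"
  shows "\<exists>v1 v0. E v1 v0 \<and> {z. E v0 z} = {v1} \<and> card {z. E v1 z \<and> card {y. E z y} \<noteq> 1} \<le> 1"
proof -
  have sym: "\<And>a b. E a b \<Longrightarrow> E b a" and irr: "\<And>a. \<not> E a a"
    and inV: "\<And>a b. E a b \<Longrightarrow> a \<in> V \<and> b \<in> V" and finV: "finite V" using g unfolding graph_def by auto
  have finN: "\<And>x. finite {z. E x z}" using inV finV by (auto intro: finite_subset[of _ V])
  have c1: "\<And>x y. E x y \<Longrightarrow> card {z. E x z} = 1 \<Longrightarrow> {z. E x z} = {y}"
    by (metis (mono_tags, lifting) card_1_singletonE mem_Collect_eq singletonD)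
  show ?thesis
  proof (cases "\<exists>x y. E x y \<and> card {z. E x z} = 1 \<and> card {z. E y z} = 1")
    case True
    then obtain x y where xy: "E x y" "card {z. E x z} = 1" "card {z. E y z} = 1" by blast
    have h1: "{z. E x z \<and> card {y. E z y} \<noteq> 1} = {}" using c1[OF xy(1) xy(2)] xy(3) by auto
    have h2: "{z. E y z} = {x}" using c1[OF sym[OF xy(1)] xy(3)] .
    have h3: "card {z. E x z \<and> card {y. E z y} \<noteq> 1} \<le> 1" unfolding h1 by simp
    have "E x y \<and> {z. E y z} = {x} \<and> card {z. E x z \<and> card {y. E z y} \<noteq> 1} \<le> 1"
      using xy(1) h2 h3 by blast
    thus ?thesis by blast
  next
    case False
    define W where "W = {v\<in>V. card {z. E v z} \<ge> 2}"
    have nz: "\<And>x y. E x y \<Longrightarrow> card {z. E x z} \<noteq> 0" using finN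
      by (metis card_0_eq empty_iff mem_Collect_eq)
    have "a \<in> W \<or> b \<in> W"
    proof (rule ccontr)
      assume "\<not> (a \<in> W \<or> b \<in> W)"
      hence "card {z. E a z} = 1" "card {z. E b z} = 1"
        using nz[OF e] nz[OF sym[OF e]] inV[OF e] unfolding W_def by auto
      thus False using False e by blast
    qed
    hence Wne: "W \<noteq> {}" by auto
    have gW: "graph W (restr W E)" using graph_restr[OF g] W_def by auto
    obtain w where w: "w \<in> W" "card (nbhd W (restr W E) w) \<le> 1"
      using leaf_exists[OF gW acyc_restr[OF a] Wne] by blast
    have eq: "{z. E w z \<and> card {y. E z y} \<noteq> 1} = nbhd W (restr W E) w"
    proof -
      have "\<And>z. E w z \<Longrightarrow> card {y. E z y} \<noteq> 1 \<longleftrightarrow> z \<in> W"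
        unfolding W_def using nz sym inV by fastforce
      thus ?thesis unfolding nbhd_def restr_def using w(1) by auto
    qed
    have cw: "card {z. E w z} \<ge> 2" using w W_def by auto
    have "\<exists>v0. E w v0 \<and> card {y. E v0 y} = 1"
    proof (rule ccontr)
      assume "\<not> ?thesis"
      hence "{z. E w z} \<subseteq> nbhd W (restr W E) w" using eq by auto
      hence "card {z. E w z} \<le> 1" using w(2) card_mono[OF finite_nbhd[OF gW]] by (meson le_trans)
      thus False using cw by auto
    qed
    then obtain v0 where v0: "E w v0" "card {y. E v0 y} = 1" by blast
    have "E w v0 \<and> {z. E v0 z} = {w} \<and> card {z. E w z \<and> card {y. E z y} \<noteq> 1} \<le> 1"
      using v0 c1[OF sym[OF v0(1)] v0(2)] eq w(2) by simp
    thus ?thesis by blast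
  qed
qed



lemma bad_or_matching:
  "graph V E \<Longrightarrow> acyc E \<Longrightarrow> (\<exists>X. bad V E D X) \<or> (\<exists>P. matching V E D P)"
proof (induction "card V" arbitrary: V E D rule: less_induct)
  case less
  note IH = less.hyps
  have g: "graph V E" and a: "acyc E" by fact+
  have sym: "\<And>a b. E a b \<Longrightarrow> E b a" and irr: "\<And>a. \<not> E a a"
    and inV: "\<And>a b. E a b \<Longrightarrow> a \<in> V \<and> b \<in> V" and finV: "finite V" using g unfolding graph_def by auto
  show ?case
  proof (cases "V - D = {}")
    case True
    have "matching V E D (\<lambda>_ _. False)" unfolding matching_def using True by auto
    thus ?thesis by blast
  next
    case nD: False
    show ?thesis
    proof (cases "\<exists>v\<in>V-D. \<forall>z. \<not> E v z")
      case True
      then obtain v where v: "v \<in> V - D" "\<forall>z. \<not> E v z" by blast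
      have "bad V E D {v}" unfolding bad_def using v by auto
      thus ?thesis by blast
    next
      case noiso: False
      show ?thesis
      proof (cases "\<exists>u w. u \<in> D \<and> {z. E u z} = {w}")
        case True
        then obtain u w where uD: "u \<in> D" and Nu: "{z. E u z} = {w}" by blast
        have Euw: "E u w" using Nu by auto
        have uV: "u \<in> V" and wV: "w \<in> V" using inV[OF Euw] by auto
        have uw: "u \<noteq> w" using Euw irr by auto
        define V' where "V' = V - {u}"
        have cV: "card V' < card V" unfolding V'_def using card_Diff1_less[OF finV uV] by simp
        have g': "graph V' (restr V' E)" using graph_restr[OF g] V'_def by auto
        have a': "acyc (restr V' E)" using acyc_restr[OF a] .
        from IH[OF cV g' a', of "insert w D"]
        show ?thesis
        proof
          assume "\<exists>X. bad V' (restr V' E) (insert w D) X"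
          then obtain X where X: "bad V' (restr V' E) (insert w D) X" by blast
          have XD: "X \<inter> D = {}" and wX: "w \<notin> X" using X unfolding bad_def by auto
          have "\<forall>x\<in>X. \<forall>z. E x z \<longrightarrow> z \<in> V'"
          proof (intro ballI allI impI)
            fix x z assume x: "x \<in> X" and "E x z"
            have "z \<noteq> u"
            proof
              assume "z = u"
              hence "x \<in> {z. E u z}" using sym \<open>E x z\<close> by auto
              thus False using Nu wX x by auto
            qed
            thus "z \<in> V'" using inV[OF \<open>E x z\<close>] V'_def by auto
          qed
          hence "bad V E D X" using bad_lift[OF X _ XD] V'_def by auto
          thus ?thesis by blast
        next
          assume "\<exists>P. matching V' (restr V' E) (insert w D) P"
          then obtain P where P: "matching V' (restr V' E) (insert w D) P" by blast
          have PE: "\<And>a b. P a b \<Longrightarrow> restr V' E a b" and Psym: "\<And>a b. P a b \<Longrightarrow> P b a"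
            and Pfun: "\<And>a b c. P a b \<Longrightarrow> P a c \<Longrightarrow> b = c"
            and Psat: "\<And>v. v \<in> V' - insert w D \<Longrightarrow> \<exists>b. P v b"
            using P unfolding matching_def by blast+
          have Pu: "\<And>b. \<not> P u b" using PE unfolding restr_def V'_def by auto
          show ?thesis
          proof (cases "\<exists>b. P w b")
            case True
            have "matching V E D P" unfolding matching_def
            proof (intro conjI allI impI ballI)
              show "\<And>a b. P a b \<Longrightarrow> E a b" using PE unfolding restr_def by auto
              show "\<And>a b. P a b \<Longrightarrow> P b a" by (rule Psym)
              show "\<And>a b c. P a b \<Longrightarrow> P a c \<Longrightarrow> b = c" by (rule Pfun)
              fix v assume v: "v \<in> V - D"
              show "\<exists>b. P v b"
              proof (cases "v = w")
                case True thus ?thesis using \<open>\<exists>b. P w b\<close> by simp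
              next
                case False thus ?thesis using Psat v uD V'_def by auto
              qed
            qed
            thus ?thesis by blast
          next
            case False
            define Q where "Q = (\<lambda>a b. P a b \<or> (a = u \<and> b = w) \<or> (a = w \<and> b = u))"
            have "matching V E D Q" unfolding matching_def
            proof (intro conjI allI impI ballI)
              show "\<And>a b. Q a b \<Longrightarrow> E a b" using PE Euw sym unfolding restr_def Q_def by auto
              show "\<And>a b. Q a b \<Longrightarrow> Q b a" using Psym unfolding Q_def by auto
              show "\<And>a b c. Q a b \<Longrightarrow> Q a c \<Longrightarrow> b = c" using Pfun Pu False uw unfolding Q_def by metis
              fix v assume v: "v \<in> V - D"
              show "\<exists>b. Q v b"
              proof (cases "v = w")
                case True thus ?thesis unfolding Q_def by auto
              next
                case False thus ?thesis using Psat v uD V'_def unfolding Q_def by auto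
              qed
            qed
            thus ?thesis by blast
          qed
        qed
      next
        case noleafD: False
        obtain v z where v: "v \<in> V - D" and Evz: "E v z" using nD noiso by blast
        obtain v1 v0 where E10: "E v1 v0" and N0: "{z. E v0 z} = {v1}"
          and cnl: "card {z. E v1 z \<and> card {y. E z y} \<noteq> 1} \<le> 1"
          using L2[OF g a Evz] by blast
        have v0D: "v0 \<notin> D" using noleafD N0 by blast
        have v01: "v0 \<noteq> v1" using E10 irr by auto
        have v0V: "v0 \<in> V" and v1V: "v1 \<in> V" using inV[OF E10] by auto
        have finN: "\<And>x. finite {z. E x z}" using inV finV by (auto intro: finite_subset[of _ V])
        show ?thesis
        proof (cases "\<exists>l. E v1 l \<and> {z. E l z} = {v1} \<and> l \<noteq> v0")
          case True
          then obtain l where l: "E v1 l" "{z. E l z} = {v1}" "l \<noteq> v0" by blast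
          have lD: "l \<notin> D" using noleafD l by blast
          have lV: "l \<in> V" using inV[OF l(1)] by auto
          have "bad V E D {v0, l}" unfolding bad_def
          proof (intro conjI ballI allI impI)
            show "{v0, l} \<noteq> {}" "{v0, l} \<subseteq> V" "{v0, l} \<inter> D = {}" using v0V lV v0D lD by auto
            fix x assume x: "x \<in> {v0, l}"
            have Nx: "{z. E x z} = {v1}" using x N0 l by auto
            { fix y assume y: "y \<in> {v0, l}"
              show "\<not> E x y"
              proof
                assume "E x y"
                hence "y = v1" using Nx by auto
                thus False using y v01 l irr by auto
              qed }
            fix z assume "E x z"
            hence zv: "z = v1" using Nx by auto
            have "{y\<in>{v0, l}. E y z} = {v0, l}" using zv E10 l sym by auto
            thus "card {y\<in>{v0, l}. E y z} = 2" using l(3) by simp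
          qed
          thus ?thesis by blast
        next
          case onel: False
          define V' where "V' = V - {v0, v1}"
          have "V' \<subset> V" unfolding V'_def using v0V by auto
          hence cV: "card V' < card V" using psubset_card_mono[OF finV] by blast
          have g': "graph V' (restr V' E)" using graph_restr[OF g] V'_def by auto
          have a': "acyc (restr V' E)" using acyc_restr[OF a] .
          from IH[OF cV g' a', of D]
          show ?thesis
          proof
            assume "\<exists>X. bad V' (restr V' E) D X"
            then obtain X where X: "bad V' (restr V' E) D X" by blast
            have XD: "X \<inter> D = {}" and XV: "X \<subseteq> V'" and Xne: "X \<noteq> {}" using X unfolding bad_def by auto
            have not0: "\<And>x. x \<in> X \<Longrightarrow> \<not> E x v0"
            proof
              fix x assume "x \<in> X" "E x v0"
              hence "x = v1" using N0 sym by auto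
              thus False using \<open>x \<in> X\<close> XV V'_def by auto
            qed
            show ?thesis
            proof (cases "\<forall>x\<in>X. \<not> E x v1")
              case True
              have "\<forall>x\<in>X. \<forall>z. E x z \<longrightarrow> z \<in> V'"
                using True not0 inV V'_def by blast
              hence "bad V E D X" using bad_lift[OF X _ XD] V'_def by auto
              thus ?thesis by blast
            next
              case False
              then obtain x2 where x2: "x2 \<in> X" "E x2 v1" by blast
              have nl: "\<And>x. x \<in> X \<Longrightarrow> E x v1 \<Longrightarrow> card {y. E x y} \<noteq> 1"
              proof
                fix x assume x: "x \<in> X" "E x v1" "card {y. E x y} = 1"
                hence "{y. E x y} = {v1}"
                  by (metis (mono_tags, lifting) card_1_singletonE mem_Collect_eq singletonD)
                moreover have "x \<noteq> v0" using x XV V'_def by auto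
                ultimately show False using onel sym x(2) by blast
              qed
              have uniq: "\<And>x. x \<in> X \<Longrightarrow> E x v1 \<Longrightarrow> x = x2"
              proof -
                fix x assume x: "x \<in> X" "E x v1"
                have "{x, x2} \<subseteq> {z. E v1 z \<and> card {y. E z y} \<noteq> 1}"
                  using x x2 nl sym by auto
                moreover have "finite {z. E v1 z \<and> card {y. E z y} \<noteq> 1}"
                  using finN[of v1] by (auto intro: finite_subset)
                ultimately have "card {x, x2} \<le> 1" using cnl by (meson card_mono le_trans)
                thus "x = x2" by (cases "x = x2") auto
              qed
              have x2v0: "x2 \<noteq> v0" using x2 XV V'_def by auto
              have XE: "\<And>x y. x \<in> X \<Longrightarrow> y \<in> X \<Longrightarrow> \<not> E x y"
                using X XV unfolding bad_def restr_def by blast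
              have Xc: "\<And>x z. x \<in> X \<Longrightarrow> restr V' E x z \<Longrightarrow> card {y\<in>X. restr V' E y z} = 2"
                using X unfolding bad_def by blast
              have "bad V E D (insert v0 X)" unfolding bad_def
              proof (intro conjI ballI allI impI)
                show "insert v0 X \<noteq> {}" by simp
                show "insert v0 X \<subseteq> V" using v0V XV V'_def by auto
                show "insert v0 X \<inter> D = {}" using XD v0D by auto
                fix x assume x: "x \<in> insert v0 X"
                { fix y assume y: "y \<in> insert v0 X"
                  show "\<not> E x y"
                  proof
                    assume Exy: "E x y"
                    show False
                    proof (cases "x = v0")
                      case True
                      hence "y = v1" using N0 Exy by auto
                      thus False using y v01 XV V'_def by auto
                    next
                      case False
                      hence xX: "x \<in> X" using x by auto
                      show False
                      proof (cases "y = v0")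
                        case True thus False using not0 xX Exy by auto
                      next
                        case False thus False using y XE xX Exy by auto
                      qed
                    qed
                  qed }
                fix z assume Exz: "E x z"
                show "card {y\<in>insert v0 X. E y z} = 2"
                proof (cases "z = v1")
                  case True
                  have E01: "E v0 v1" using sym[OF E10] .
                  have "{y\<in>insert v0 X. E y z} = {v0, x2}"
                  proof (rule set_eqI)
                    fix y show "y \<in> {y\<in>insert v0 X. E y z} \<longleftrightarrow> y \<in> {v0, x2}"
                      using True uniq[of y] x2 E01 by blast
                  qed
                  thus ?thesis using x2v0 by simp
                next
                  case False
                  have xX: "x \<in> X" using x False Exz N0 by auto
                  have zV': "z \<in> V'" using False not0[OF xX] Exz inV V'_def by auto
                  have "{y\<in>insert v0 X. E y z} = {y\<in>X. restr V' E y z}"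
                    using False N0 zV' XV sym unfolding restr_def by auto
                  moreover have "restr V' E x z" using Exz zV' xX XV unfolding restr_def by auto
                  ultimately show ?thesis using Xc xX by simp
                qed
              qed
              thus ?thesis by blast
            qed
          next
            assume "\<exists>P. matching V' (restr V' E) D P"
            then obtain P where P: "matching V' (restr V' E) D P" by blast
            have PE: "\<And>a b. P a b \<Longrightarrow> restr V' E a b" and Psym: "\<And>a b. P a b \<Longrightarrow> P b a"
              and Pfun: "\<And>a b c. P a b \<Longrightarrow> P a c \<Longrightarrow> b = c"
              and Psat: "\<And>v. v \<in> V' - D \<Longrightarrow> \<exists>b. P v b"
              using P unfolding matching_def by blast+
            have P01: "\<And>b. \<not> P v0 b" "\<And>b. \<not> P v1 b" using PE unfolding restr_def V'_def by auto
            define Q where "Q = (\<lambda>a b. P a b \<or> (a = v0 \<and> b = v1) \<or> (a = v1 \<and> b = v0))"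
            have "matching V E D Q" unfolding matching_def
            proof (intro conjI allI impI ballI)
              show "\<And>a b. Q a b \<Longrightarrow> E a b" using PE E10 sym unfolding restr_def Q_def by auto
              show "\<And>a b. Q a b \<Longrightarrow> Q b a" using Psym unfolding Q_def by auto
              show "\<And>a b c. Q a b \<Longrightarrow> Q a c \<Longrightarrow> b = c" using Pfun P01 v01 unfolding Q_def by metis
              fix v assume v: "v \<in> V - D"
              show "\<exists>b. Q v b"
              proof (cases "v = v0 \<or> v = v1")
                case True thus ?thesis unfolding Q_def by auto
              next
                case False thus ?thesis using Psat v V'_def unfolding Q_def by auto
              qed
            qed
            thus ?thesis by blast
          qed
        qed
      qed
    qed
  qed
qed



lemma sub_bad:
  assumes g: "graph V E" and s: "substructure V E VF EF X" and XD: "X \<inter> D = {}"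
  shows "bad V E D X"
proof -
  obtain ET m where XVF: "X \<subseteq> VF" and t: "tree X ET"
    and bij: "bij_betw m {{x, y} | x y. ET x y} (VF - X)"
    and EFd: "\<forall>u w. EF u w \<longleftrightarrow> (\<exists>x y. ET x y \<and> ((u = x \<and> w = m {x, y}) \<or> (u = m {x, y} \<and> w = x)))"
    using s unfolding substructure_def is_S_graph_def by blast
  have sg: "graph VF EF" "VF \<subseteq> V" "\<And>u w. EF u w \<Longrightarrow> E u w"
    using s unfolding substructure_def subgraph_def by auto
  have deg: "\<And>v. v\<in>X \<Longrightarrow> degree V E v = degree VF EF v" using s unfolding substructure_def by auto
  have gt: "graph X ET" using t unfolding tree_def by auto
  have ETsym: "\<And>a b. ET a b \<Longrightarrow> ET b a" and ETirr: "\<And>a. \<not> ET a a"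
    and ETin: "\<And>a b. ET a b \<Longrightarrow> a \<in> X \<and> b \<in> X" using gt unfolding graph_def by auto
  have mout: "\<And>x y. ET x y \<Longrightarrow> m {x,y} \<in> VF - X"
    using bij_betwE[OF bij] by blast
  have minj: "\<And>x y x' y'. ET x y \<Longrightarrow> ET x' y' \<Longrightarrow> m {x,y} = m {x',y'} \<Longrightarrow> {x,y} = {x',y'}"
  proof -
    fix x y x' y' assume "ET x y" "ET x' y'" "m {x,y} = m {x',y'}"
    moreover have "inj_on m {{x, y} | x y. ET x y}" using bij unfolding bij_betw_def by auto
    ultimately show "{x,y} = {x',y'}" unfolding inj_on_def by blast
  qed
  have full: "\<And>x z. x \<in> X \<Longrightarrow> E x z \<Longrightarrow> EF x z"
  proof -
    fix x z assume x: "x \<in> X" and Exz: "E x z"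
    have sub: "nbhd VF EF x \<subseteq> nbhd V E x" unfolding nbhd_def using sg by auto
    have "finite (nbhd V E x)" using finite_nbhd[OF g] .
    hence eq: "nbhd VF EF x = nbhd V E x" using card_subset_eq[OF _ sub] deg[OF x]
      unfolding degree_def by auto
    have "z \<in> nbhd V E x" using Exz g unfolding nbhd_def graph_def by auto
    thus "EF x z" using eq unfolding nbhd_def by auto
  qed
  have EFX: "\<And>x z. x \<in> X \<Longrightarrow> EF x z \<Longrightarrow> \<exists>y. ET x y \<and> z = m {x,y}"
  proof -
    fix x z assume x: "x \<in> X" and "EF x z"
    then obtain a b where ab: "ET a b" "(x = a \<and> z = m {a, b}) \<or> (x = m {a, b} \<and> z = a)"
      using EFd by blast
    have "\<not> (x = m {a, b})" using mout[OF ab(1)] x by auto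
    thus "\<exists>y. ET x y \<and> z = m {x,y}" using ab by auto
  qed
  show ?thesis unfolding bad_def
  proof (intro conjI ballI allI impI)
    show "X \<noteq> {}" using t unfolding tree_def by auto
    show "X \<subseteq> V" using XVF sg by auto
    show "X \<inter> D = {}" by fact
    fix x assume x: "x \<in> X"
    { fix y assume y: "y \<in> X"
      show "\<not> E x y"
      proof
        assume "E x y"
        then obtain y' where "ET x y'" "y = m {x, y'}" using EFX[OF x full[OF x]] by blast
        thus False using mout y by auto
      qed }
    fix z assume Exz: "E x z"
    obtain y where y: "ET x y" "z = m {x,y}" using EFX[OF x full[OF x Exz]] by blast
    have "{w\<in>X. E w z} = {x, y}"
    proof (rule set_eqI, rule iffI)
      fix w assume "w \<in> {w\<in>X. E w z}"
      hence w: "w \<in> X" "E w z" by auto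
      obtain y' where "ET w y'" "z = m {w, y'}" using EFX[OF w(1) full[OF w]] by blast
      hence "{w, y'} = {x, y}" using minj y by metis
      thus "w \<in> {x, y}" by auto
    next
      fix w assume w: "w \<in> {x, y}"
      have "EF y (m {y, x})" using EFd ETsym[OF y(1)] by blast
      hence "E y z" using sg(3) y(2) by (simp add: insert_commute)
      thus "w \<in> {w\<in>X. E w z}" using w x Exz ETin[OF y(1)] by auto
    qed
    thus "card {w\<in>X. E w z} = 2" using ETirr y(1) by (metis card_2_iff)
  qed
qed



lemma min_bad:
  assumes "finite V" "bad V E D X"
  shows "\<exists>Y. bad V E D Y \<and> (\<forall>Z. Z \<subset> Y \<longrightarrow> \<not> bad V E D Z)"
  using assms(2)
proof (induction "card X" arbitrary: X rule: less_induct)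
  case less
  show ?case
  proof (cases "\<forall>Z. Z \<subset> X \<longrightarrow> \<not> bad V E D Z")
    case True thus ?thesis using less.prems by blast
  next
    case False
    then obtain Z where Z: "Z \<subset> X" "bad V E D Z" by blast
    have "finite X" using less.prems assms(1) unfolding bad_def by (auto intro: finite_subset)
    hence "card Z < card X" using Z psubset_card_mono by blast
    thus ?thesis using less.hyps Z by blast
  qed
qed

lemma two_set: "card S = 2 \<Longrightarrow> a \<in> S \<Longrightarrow> b \<in> S \<Longrightarrow> a \<noteq> b \<Longrightarrow> S = {a, b}"
  by (metis card_2_iff doubleton_eq_iff insertE singletonD)

lemma rtranclp_sym: assumes s: "\<And>a b. R a b \<Longrightarrow> R b a" shows "R\<^sup>*\<^sup>* x y \<Longrightarrow> R\<^sup>*\<^sup>* y x"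
proof (induction rule: rtranclp_induct)
  case base thus ?case by simp
next
  case (step y z) thus ?case using s by (meson converse_rtranclp_into_rtranclp)
qed

lemma mod_succ: "(a::nat) < k \<Longrightarrow> (a + 1) mod k = (if a + 1 = k then 0 else a + 1)"
  by auto

lemma four_cycle:
  assumes g: "graph V E" and a: "acyc E" and xy: "x \<noteq> y"
    and e: "E x z" "E y z" "E x z'" "E y z'"
  shows "z = z'"
proof (rule ccontr)
  assume zz: "z \<noteq> z'"
  have sym: "\<And>a b. E a b \<Longrightarrow> E b a" and irr: "\<And>a. \<not> E a a" using g unfolding graph_def by auto
  have "is_cycle E [x, z, y, z']"
    unfolding is_cycle_def
  proof (intro conjI allI impI)
    show "distinct [x, z, y, z']" using xy zz e irr by auto
    fix i assume "Suc i < length [x, z, y, z']"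
    hence "i = 0 \<or> i = 1 \<or> i = 2" by auto
    thus "E ([x, z, y, z'] ! i) ([x, z, y, z'] ! Suc i)" using e sym by auto
  qed (use e sym in auto)
  thus False using a unfolding acyc_def by blast
qed

lemma minbad_sub:
  assumes g: "graph V E" and a: "acyc E" and b: "bad V E D X"
    and mn: "\<forall>Z. Z \<subset> X \<longrightarrow> \<not> bad V E D Z"
  shows "\<exists>VF EF. substructure V E VF EF X"
proof -
  have sym: "\<And>a b. E a b \<Longrightarrow> E b a" and irr: "\<And>a. \<not> E a a"
    and inV: "\<And>a b. E a b \<Longrightarrow> a \<in> V \<and> b \<in> V" and finV: "finite V" using g unfolding graph_def by auto
  have XV: "X \<subseteq> V" and Xne: "X \<noteq> {}" and XD: "X \<inter> D = {}"
    and ind: "\<And>x y. x \<in> X \<Longrightarrow> y \<in> X \<Longrightarrow> \<not> E x y"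
    and cnt: "\<And>x z. x \<in> X \<Longrightarrow> E x z \<Longrightarrow> card {y\<in>X. E y z} = 2"
    using b unfolding bad_def by auto
  have finX: "finite X" using XV finV by (auto intro: finite_subset)
  have k1: "\<And>x z. x \<in> X \<Longrightarrow> E x z \<Longrightarrow> \<exists>y. y \<in> X \<and> y \<noteq> x \<and> E y z \<and> {w\<in>X. E w z} = {x, y}"
  proof -
    fix x z assume x: "x \<in> X" and Exz: "E x z"
    have c: "card {w\<in>X. E w z} = 2" using cnt[OF x Exz] .
    then obtain p q where pq: "{w\<in>X. E w z} = {p, q}" "p \<noteq> q" by (metis card_2_iff)
    have "x \<in> {p, q}" using pq x Exz by blast
    then obtain y where "y \<in> {p,q}" "y \<noteq> x" "{p, q} = {x, y}" using pq(2) by blast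
    thus "\<exists>y. y \<in> X \<and> y \<noteq> x \<and> E y z \<and> {w\<in>X. E w z} = {x, y}" using pq(1) by auto
  qed
  define ET where "ET = (\<lambda>x y. x \<in> X \<and> y \<in> X \<and> x \<noteq> y \<and> (\<exists>z. E x z \<and> E y z))"
  define mid where "mid = (\<lambda>e. SOME z. \<forall>v\<in>e. E v z)"
  define VF where "VF = X \<union> {z. \<exists>x\<in>X. E x z}"
  define EF where "EF = (\<lambda>u w. \<exists>x y. ET x y \<and> ((u = x \<and> w = mid {x, y}) \<or> (u = mid {x, y} \<and> w = x)))"
  have ETsym: "\<And>x y. ET x y \<Longrightarrow> ET y x" unfolding ET_def by blast
  have midp: "\<And>x y. ET x y \<Longrightarrow> E x (mid {x, y}) \<and> E y (mid {x, y})"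
  proof -
    fix x y assume "ET x y"
    then obtain z where "E x z" "E y z" unfolding ET_def by blast
    hence ex: "\<exists>z. \<forall>v\<in>{x,y}. E v z" by blast
    show "E x (mid {x, y}) \<and> E y (mid {x, y})" using someI_ex[OF ex] unfolding mid_def by simp
  qed
  have mideq: "\<And>x y z. ET x y \<Longrightarrow> E x z \<Longrightarrow> E y z \<Longrightarrow> mid {x, y} = z"
    using midp four_cycle[OF g a] unfolding ET_def by metis
  have midX: "\<And>x y. ET x y \<Longrightarrow> mid {x, y} \<notin> X"
    using midp ind unfolding ET_def by blast
  have midVF: "\<And>x y. ET x y \<Longrightarrow> mid {x, y} \<in> VF"
    using midp unfolding ET_def VF_def by blast
  have set2: "\<And>x y z. ET x y \<Longrightarrow> E x z \<Longrightarrow> E y z \<Longrightarrow> {w\<in>X. E w z} = {x, y}"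
  proof -
    fix x y z assume "ET x y" "E x z" "E y z"
    moreover have xy: "x \<in> X" "y \<in> X" "x \<noteq> y" using \<open>ET x y\<close> unfolding ET_def by auto
    ultimately show "{w\<in>X. E w z} = {x, y}" using two_set[OF cnt[OF xy(1) \<open>E x z\<close>], of x y] xy by blast
  qed
  have set2_mid: "\<And>x y x' y'. ET x y \<Longrightarrow> ET x' y' \<Longrightarrow> mid {x, y} = mid {x', y'} \<Longrightarrow> {x, y} = {x', y'}"
  proof -
    fix x y x' y' assume h: "ET x y" "ET x' y'" "mid {x, y} = mid {x', y'}"
    have e1: "{w\<in>X. E w (mid {x, y})} = {x, y}" using set2[OF h(1)] midp[OF h(1)] by blast
    have e2: "{w\<in>X. E w (mid {x', y'})} = {x', y'}" using set2[OF h(2)] midp[OF h(2)] by blast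
    have "{x, y} = {w\<in>X. E w (mid {x, y})}" using e1[symmetric] .
    also have "\<dots> = {w\<in>X. E w (mid {x', y'})}" by (simp only: h(3))
    also have "\<dots> = {x', y'}" by (rule e2)
    finally show "{x, y} = {x', y'}" .
  qed
  obtain x0 where x0: "x0 \<in> X" using Xne by auto
  define C where "C = {y\<in>X. ET\<^sup>*\<^sup>* x0 y}"
  have Cb: "bad V E D C" unfolding bad_def
  proof (intro conjI ballI allI impI)
    show "C \<noteq> {}" using x0 unfolding C_def by auto
    show "C \<subseteq> V" "C \<inter> D = {}" using XV XD unfolding C_def by auto
    fix c assume c: "c \<in> C"
    { fix y assume "y \<in> C" thus "\<not> E c y" using ind c unfolding C_def by auto }
    fix z assume Ecz: "E c z"
    have "{y\<in>C. E y z} = {y\<in>X. E y z}"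
    proof (rule set_eqI, rule iffI)
      fix y assume "y \<in> {y\<in>X. E y z}"
      hence y: "y \<in> X" "E y z" by auto
      show "y \<in> {y\<in>C. E y z}"
      proof (cases "y = c")
        case True thus ?thesis using c y by auto
      next
        case False
        hence "ET c y" using c y Ecz unfolding ET_def C_def by auto
        hence "ET\<^sup>*\<^sup>* x0 y" using c unfolding C_def by (auto intro: rtranclp.rtrancl_into_rtrancl)
        thus ?thesis using y unfolding C_def by auto
      qed
    qed (auto simp: C_def)
    thus "card {y\<in>C. E y z} = 2" using cnt c Ecz unfolding C_def by auto
  qed
  have "C \<subseteq> X" unfolding C_def by auto
  hence CX: "C = X" using mn Cb by blast
  have conn: "connected X ET" unfolding connected_def
  proof (intro ballI)
    fix u v assume "u \<in> X" "v \<in> X"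
    hence "ET\<^sup>*\<^sup>* x0 u" "ET\<^sup>*\<^sup>* x0 v" using CX unfolding C_def by auto
    thus "ET\<^sup>*\<^sup>* u v" using rtranclp_sym[of ET, OF ETsym] by (meson rtranclp_trans)
  qed
  have gET: "graph X ET" unfolding graph_def using finX unfolding ET_def by blast
  have acET: "\<nexists>cs. is_cycle ET cs"
  proof
    assume "\<exists>cs. is_cycle ET cs"
    then obtain cs where cs: "is_cycle ET cs" by blast
    define k where "k = length cs"
    have k3: "k \<ge> 3" and dcs: "distinct cs" and adj: "\<And>i. Suc i < k \<Longrightarrow> ET (cs!i) (cs!Suc i)"
      and lh: "ET (last cs) (hd cs)" using cs unfolding is_cycle_def k_def by auto
    have csne: "cs \<noteq> []" using k3 k_def by auto
    have ETi: "\<And>i. i < k \<Longrightarrow> ET (cs!i) (cs!((i+1) mod k))"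
    proof -
      fix i assume i: "i < k"
      show "ET (cs!i) (cs!((i+1) mod k))"
      proof (cases "i + 1 = k")
        case True
        have l1: "last cs = cs ! (length cs - 1)" using csne by (simp add: last_conv_nth)
        have "length cs - 1 = i" using True k_def by simp
        hence "last cs = cs ! i" using l1 by simp
        moreover have "hd cs = cs ! 0" using csne by (simp add: hd_conv_nth)
        ultimately show ?thesis using lh True by simp
      next
        case False thus ?thesis using adj i by simp
      qed
    qed
    have csX: "\<And>i. i < k \<Longrightarrow> cs ! i \<in> X" using ETi unfolding ET_def by blast
    define mi where "mi = (\<lambda>i. mid {cs!i, cs!((i+1) mod k)})"
    define f where "f = (\<lambda>j. if even j then cs!(j div 2) else mi (j div 2))"
    define ds where "ds = map f [0..<2*k]"
    have mip: "\<And>i. i < k \<Longrightarrow> E (cs!i) (mi i) \<and> E (cs!((i+1) mod k)) (mi i) \<and> mi i \<notin> X"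
      using ETi midp midX unfolding mi_def by blast
    have inj: "inj_on f {0..<2*k}"
    proof (rule inj_onI)
      fix j1 j2 assume j1: "j1 \<in> {0..<2*k}" and j2: "j2 \<in> {0..<2*k}" and fe: "f j1 = f j2"
      have i1: "j1 div 2 < k" and i2: "j2 div 2 < k" using j1 j2 by auto
      show "j1 = j2"
      proof (cases "even j1")
        case e1: True
        show ?thesis
        proof (cases "even j2")
          case True
          hence "cs!(j1 div 2) = cs!(j2 div 2)" using fe e1 unfolding f_def by simp
          hence "j1 div 2 = j2 div 2" using dcs i1 i2 k_def nth_eq_iff_index_eq by metis
          thus ?thesis using e1 True by (metis div_mult_mod_eq even_iff_mod_2_eq_zero)
        next
          case False
          hence "cs!(j1 div 2) = mi (j2 div 2)" using fe e1 unfolding f_def by simp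
          thus ?thesis using csX[OF i1] mip[OF i2] by simp
        qed
      next
        case o1: False
        show ?thesis
        proof (cases "even j2")
          case True
          hence "cs!(j2 div 2) = mi (j1 div 2)" using fe o1 unfolding f_def by simp
          thus ?thesis using csX[OF i2] mip[OF i1] by simp
        next
          case o2: False
          define a1 where "a1 = j1 div 2"
          define a2 where "a2 = j2 div 2"
          have a1k: "a1 < k" and a2k: "a2 < k" using i1 i2 a1_def a2_def by auto
          have "mi a1 = mi a2" using fe o1 o2 unfolding f_def a1_def a2_def by simp
          hence "mid {cs!a1, cs!((a1+1) mod k)} = mid {cs!a2, cs!((a2+1) mod k)}" unfolding mi_def .
          moreover have e1: "ET (cs!a1) (cs!((a1+1) mod k))" "ET (cs!a2) (cs!((a2+1) mod k))"
            using ETi a1k a2k by auto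
          ultimately have "{cs!a1, cs!((a1+1) mod k)} = {cs!a2, cs!((a2+1) mod k)}"
            using set2_mid by blast
          moreover have m1: "(a1+1) mod k < k" "(a2+1) mod k < k" using k3 by auto
          ultimately have "(a1 = a2 \<and> (a1+1) mod k = (a2+1) mod k) \<or> (a1 = (a2+1) mod k \<and> (a1+1) mod k = a2)"
            using dcs a1k a2k k_def nth_eq_iff_index_eq doubleton_eq_iff by metis
          hence "a1 = a2" using mod_succ[OF a1k] mod_succ[OF a2k] k3 by (auto split: if_splits)
          thus ?thesis using o1 o2 a1_def a2_def by (metis div_mult_mod_eq odd_iff_mod_2_eq_one)
        qed
      qed
    qed
    have "is_cycle E ds" unfolding is_cycle_def
    proof (intro conjI allI impI)
      show "3 \<le> length ds" using k3 ds_def by simp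
      show "distinct ds" unfolding ds_def using inj by (simp add: distinct_map)
      fix j assume "Suc j < length ds"
      hence j: "Suc j < 2 * k" using ds_def by simp
      have dsj: "ds ! j = f j" "ds ! Suc j = f (Suc j)" using j ds_def by auto
      show "E (ds ! j) (ds ! Suc j)"
      proof (cases "even j")
        case True
        hence "f j = cs!(j div 2)" "f (Suc j) = mi (j div 2)" unfolding f_def by auto
        moreover have "j div 2 < k" using j by auto
        ultimately show ?thesis using dsj mip by simp
      next
        case False
        hence "f j = mi (j div 2)" "f (Suc j) = cs!(Suc (j div 2))" unfolding f_def
          by (auto elim: oddE)
        moreover have "Suc (j div 2) < k" using j False by (auto elim!: oddE)
        ultimately show ?thesis using dsj mip[of "j div 2"] sym mod_succ[of "j div 2" k] by auto
      qed
    next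
      have l: "last ds = f (2*k - 1)" using k3 ds_def by (simp add: last_map)
      have o: "odd (2*k - 1)" using k3 by simp
      have dv: "(2*k - 1) div 2 = k - 1" using k3 by auto
      have "f (2*k - 1) = mi ((2*k - 1) div 2)" unfolding f_def using o by simp
      hence "last ds = mi (k - 1)" using l dv by simp
      moreover have "hd ds = cs ! 0" using k3 ds_def unfolding f_def by (simp add: hd_map hd_upt)
      moreover have "((k - 1) + 1) mod k = 0" using k3 by simp
      ultimately show "E (last ds) (hd ds)" using mip[of "k - 1"] k3 sym by auto
    qed
    thus False using a unfolding acyc_def by blast
  qed
  have tree: "tree X ET" unfolding tree_def using gET Xne conn acET by blast
  have bij: "bij_betw mid {{x, y} | x y. ET x y} (VF - X)"
    unfolding bij_betw_def
  proof
    show "inj_on mid {{x, y} | x y. ET x y}"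
    proof (rule inj_onI)
      fix e1 e2 assume "e1 \<in> {{x, y} | x y. ET x y}" "e2 \<in> {{x, y} | x y. ET x y}" "mid e1 = mid e2"
      then obtain x y x' y' where "e1 = {x, y}" "ET x y" "e2 = {x', y'}" "ET x' y'" "mid {x,y} = mid {x', y'}"
        by blast
      thus "e1 = e2" using set2_mid by blast
    qed
    show "mid ` {{x, y} | x y. ET x y} = VF - X"
    proof (rule set_eqI, rule iffI)
      fix z assume "z \<in> mid ` {{x, y} | x y. ET x y}"
      then obtain x y where "ET x y" "z = mid {x,y}" by blast
      thus "z \<in> VF - X" using midX midVF by blast
    next
      fix z assume "z \<in> VF - X"
      then obtain x where x: "x \<in> X" "E x z" "z \<notin> X" unfolding VF_def by blast
      then obtain y where y: "y \<in> X" "y \<noteq> x" "E y z" using k1 by blast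
      have ET: "ET x y" using x y unfolding ET_def by blast
      hence "mid {x, y} = z" using mideq x y by blast
      thus "z \<in> mid ` {{x, y} | x y. ET x y}" using ET by blast
    qed
  qed
  have sgraph: "is_S_graph VF EF X" unfolding is_S_graph_def
    using tree bij unfolding EF_def VF_def by blast
  have EFE: "\<And>u w. EF u w \<Longrightarrow> E u w" using midp sym unfolding EF_def by blast
  have g1: "finite VF" unfolding VF_def using finX finV inV by (auto intro: finite_subset[of _ V])
  have g2: "\<And>u w. EF u w \<Longrightarrow> u \<in> VF \<and> w \<in> VF \<and> EF w u"
  proof -
    fix u w assume "EF u w"
    then obtain x y where xy: "ET x y" "(u = x \<and> w = mid {x, y}) \<or> (u = mid {x, y} \<and> w = x)"
      unfolding EF_def by blast
    have "x \<in> VF" using xy unfolding ET_def VF_def by auto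
    hence 1: "u \<in> VF \<and> w \<in> VF" using xy midVF by auto
    have h: "ET x y \<and> ((w = x \<and> u = mid {x, y}) \<or> (w = mid {x, y} \<and> u = x))" using xy by auto
    have "EF w u" unfolding EF_def apply (rule exI[where x=x]) apply (rule exI[where x=y]) by (rule h)
    thus "u \<in> VF \<and> w \<in> VF \<and> EF w u" using 1 by simp
  qed
  have g3: "\<And>u. \<not> EF u u"
  proof
    fix u assume "EF u u"
    then obtain x y where xy: "ET x y" "(u = x \<and> u = mid {x, y}) \<or> (u = mid {x, y} \<and> u = x)"
      unfolding EF_def by blast
    hence "mid {x, y} = x" by auto
    moreover have "x \<in> X" using xy(1) unfolding ET_def by blast
    ultimately show False using midX[OF xy(1)] by simp
  qed
  have gF: "graph VF EF" unfolding graph_def using g1 g2 g3 by blast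
  have VFV: "VF \<subseteq> V" unfolding VF_def using XV inV by auto
  have nb: "\<And>v. v \<in> X \<Longrightarrow> nbhd V E v = nbhd VF EF v"
  proof -
    fix v assume v: "v \<in> X"
    have "\<And>z. EF v z \<longleftrightarrow> E v z"
    proof
      fix z assume "EF v z" thus "E v z" by (rule EFE)
    next
      fix z assume Evz: "E v z"
      then obtain y where y: "y \<in> X" "y \<noteq> v" "E y z" using k1 v by blast
      have ET: "ET v y" using v y Evz unfolding ET_def by blast
      hence "mid {v, y} = z" using mideq Evz y by blast
      thus "EF v z" using ET unfolding EF_def by blast
    qed
    moreover have "\<And>z. E v z \<Longrightarrow> z \<in> VF" using v unfolding VF_def by blast
    ultimately show "nbhd V E v = nbhd VF EF v" unfolding nbhd_def using inV by blast
  qed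
  have "substructure V E VF EF X" unfolding substructure_def subgraph_def degree_def
    using sgraph gF VFV EFE nb by simp
  thus ?thesis by blast
qed

lemma bad_sub:
  assumes g: "graph V E" and a: "acyc E" and b: "bad V E D X"
  shows "\<exists>VF EF X. substructure V E VF EF X \<and> X \<inter> D = {}"
proof -
  obtain Y where Y: "bad V E D Y" "\<forall>Z. Z \<subset> Y \<longrightarrow> \<not> bad V E D Z"
    using min_bad[OF _ b] g unfolding graph_def by blast
  from minbad_sub[OF g a Y] obtain VF EF where "substructure V E VF EF Y" by blast
  moreover have "Y \<inter> D = {}" using Y unfolding bad_def by auto
  ultimately show ?thesis by blast
qed


theorem theorem4p5:
  fixes V :: "'a set" and E :: "'a \<Rightarrow> 'a \<Rightarrow> bool" and D :: "'a set"
  assumes "tree V E" and "D \<subseteq> V"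
  shows "staller_wins_MBD V E D \<longleftrightarrow>
         (\<exists>VF EF X. substructure V E VF EF X \<and> X \<inter> D = {})"
proof
  have g: "graph V E" and a: "acyc E" using assms(1) unfolding tree_def acyc_def by auto
  have inV: "\<And>a b. E a b \<Longrightarrow> a \<in> V \<and> b \<in> V" and finV: "finite V" using g unfolding graph_def by auto
  {
    assume w: "staller_wins_MBD V E D"
    from bad_or_matching[OF g a, of D]
    show "\<exists>VF EF X. substructure V E VF EF X \<and> X \<inter> D = {}"
    proof
      assume "\<exists>X. bad V E D X"
      then obtain X where "bad V E D X" by blast
      thus ?thesis using bad_sub[OF g a] by blast
    next
      assume "\<exists>P. matching V E D P"
      then obtain P where P: "matching V E D P" by blast
      have "dinv P {} V" unfolding dinv_def using P inV unfolding matching_def by blast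
      hence "\<not> mbd_win V E D (card V) {} V True" using dom_wins[OF g P finV] by simp
      thus ?thesis using w unfolding staller_wins_MBD_def by simp
    qed
  }
  {
    assume "\<exists>VF EF X. substructure V E VF EF X \<and> X \<inter> D = {}"
    then obtain VF EF X where s: "substructure V E VF EF X" and XD: "X \<inter> D = {}" by blast
    have b: "bad V E D X" using sub_bad[OF g s XD] .
    have "sinv V E D {} V X" unfolding sinv_def using b inV unfolding bad_def by blast
    thus "staller_wins_MBD V E D" unfolding staller_wins_MBD_def using staller_strat[OF g a finV] by simp
  }
qed

end
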